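(* Let $\mu\in(0,1/2]$. The function $R_S(g,c)=2\sqrt{\frac{\sqrt{1-gc}}{g-c+2\sqrt{(1-2\mu)^2-gc}}}\,\frac{K(r_2)}{K(k_1)}$ has no critical point in the region $S$, i.e. its gradient with respect to $(g,c)$ is nonzero at every point of $S$.
   Context: $c_J=-1-2\sqrt{\mu(1-\mu)}$, $c_h=-1+2\mu$, $S=\{c<c_J,\ -c-2<g<-c-2(1-2\mu)\}\cup\{c_J\le c<c_h,\ (1-2\mu)^2/c<g<-c-2(1-2\mu)\}$. $K(k)=\frac{\pi}{2}\sum_{n\ge0}\big(\frac{(2n-1)!!}{(2n)!!}\big)^2k^{2n}$ is the complete elliptic integral of the first kind, $k_1^2=\frac12\big(1-\frac{g-c}{2\sqrt{1-gc}}\big)$, $r_2^2=\frac{g-c-2\sqrt{(1-2\mu)^2-gc}}{g-c+2\sqrt{(1-2\mu)^2-gc}}$. *)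

theory Defs
  imports "HOL-Analysis.Analysis"
begin

text \<open>Double factorial, with the convention 0!! = 1 (so that (2*0-1)!! = 1, matching (-1)!! = 1).\<close>
fun dfact :: "nat \<Rightarrow> nat" where
  "dfact 0 = 1"
| "dfact (Suc 0) = 1"
| "dfact (Suc (Suc n)) = Suc (Suc n) * dfact n"

text \<open>Complete elliptic integral of the first kind, via its power series in the modulus k.\<close>
definition ellK :: "real \<Rightarrow> real" where
  "ellK k = pi / 2 * (\<Sum>n. (real (dfact (2*n - 1)) / real (dfact (2*n)))^2 * k^(2*n))"

definition cJ :: "real \<Rightarrow> real" where
  "cJ \<mu> = -1 - 2 * sqrt (\<mu> * (1 - \<mu>))"

definition ch :: "real \<Rightarrow> real" where
  "ch \<mu> = -1 + 2 * \<mu>"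

definition regionS :: "real \<Rightarrow> (real \<times> real) set" where
  "regionS \<mu> = {(g, c). c < cJ \<mu> \<and> -c - 2 < g \<and> g < -c - 2 * (1 - 2*\<mu>)}
             \<union> {(g, c). cJ \<mu> \<le> c \<and> c < ch \<mu> \<and> (1 - 2*\<mu>)^2 / c < g \<and> g < -c - 2 * (1 - 2*\<mu>)}"

text \<open>Moduli k_1 and r_2, given as square roots of the stated k_1^2 and r_2^2.\<close>
definition k1 :: "real \<Rightarrow> real \<Rightarrow> real" where
  "k1 g c = sqrt ((1 - (g - c) / (2 * sqrt (1 - g*c))) / 2)"

definition r2 :: "real \<Rightarrow> real \<Rightarrow> real \<Rightarrow> real" where
  "r2 \<mu> g c = sqrt ((g - c - 2 * sqrt ((1 - 2*\<mu>)^2 - g*c)) / (g - c + 2 * sqrt ((1 - 2*\<mu>)^2 - g*c)))"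

definition RS :: "real \<Rightarrow> real \<Rightarrow> real \<Rightarrow> real" where
  "RS \<mu> g c = 2 * sqrt (sqrt (1 - g*c) / (g - c + 2 * sqrt ((1 - 2*\<mu>)^2 - g*c)))
               * ellK (r2 \<mu> g c) / ellK (k1 g c)"

end

theory Submission imports Defs begin


lemma dfact_pos: "0 < dfact n"
  by (induction n rule: dfact.induct) auto

lemma dfact_mono_Suc: "dfact n \<le> dfact (Suc n)"
proof (induction n rule: dfact.induct)
  case (3 n)
  have "dfact (Suc (Suc n)) = Suc (Suc n) * dfact n" by simp
  also have "\<dots> \<le> Suc (Suc n) * dfact (Suc n)" using 3 by (rule mult_le_mono2)
  also have "\<dots> \<le> Suc (Suc (Suc n)) * dfact (Suc n)" by simp
  finally show ?case by simp
qed auto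

definition bK :: "nat \<Rightarrow> real" where
  "bK n = (real (dfact (2*n - 1)) / real (dfact (2*n)))^2"

lemma bK_nonneg: "0 \<le> bK n" by (simp add: bK_def)

lemma bK_le1: "bK n \<le> 1"
proof -
  have "dfact (2*n - 1) \<le> dfact (2*n)"
  proof (cases n)
    case (Suc m) then have "2*n = Suc (2*n - 1)" by simp
    then show ?thesis by (metis dfact_mono_Suc)
  qed simp
  then have "real (dfact (2*n - 1)) / real (dfact (2*n)) \<le> 1"
    using dfact_pos[of "2*n"] by (simp add: divide_le_eq_1)
  moreover have "0 \<le> real (dfact (2*n - 1)) / real (dfact (2*n))" by simp
  ultimately show ?thesis unfolding bK_def by (simp add: power_le_one)
qed

lemma bK0: "bK 0 = 1" by (simp add: bK_def)

definition Pser :: "real \<Rightarrow> real" where "Pser y = (\<Sum>n. bK n * y^n)"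
definition Pder :: "real \<Rightarrow> real" where "Pder y = (\<Sum>n. diffs bK n * y^n)"

lemma ellK_eq: "ellK k = pi/2 * Pser (k^2)"
  unfolding ellK_def Pser_def bK_def by (simp add: power_mult)

lemma summ_P: assumes "\<bar>y\<bar> < 1" shows "summable (\<lambda>n. bK n * y^n)"
proof (rule summable_comparison_test[where g="\<lambda>n. \<bar>y\<bar>^n"])
  show "\<exists>N. \<forall>n\<ge>N. norm (bK n * y ^ n) \<le> \<bar>y\<bar> ^ n"
    using bK_le1 bK_nonneg by (auto simp: abs_mult power_abs intro!: mult_left_le_one_le)
  show "summable (\<lambda>n. \<bar>y\<bar> ^ n)" using assms by (simp add: summable_geometric)
qed

lemma Pser_deriv: assumes "\<bar>y\<bar> < 1" shows "(Pser has_real_derivative Pder y) (at y)"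
  unfolding Pser_def Pder_def
  by (rule termdiffs_strong'[where K=1]) (use summ_P assms in auto)

lemma Pder_nonneg: assumes "0 \<le> y" "y < 1" shows "0 \<le> Pder y"
proof -
  have "summable (\<lambda>n. diffs bK n * y^n)"
    by (rule termdiff_converges[where K=1]) (use summ_P assms in auto)
  then show ?thesis unfolding Pder_def
    by (rule suminf_nonneg) (use assms bK_nonneg in \<open>auto simp: diffs_def\<close>)
qed

lemma Pser_ge1: assumes "0 \<le> y" "y < 1" shows "1 \<le> Pser y"
proof -
  have "sum (\<lambda>n. bK n * y^n) {..<1} \<le> Pser y" unfolding Pser_def
    by (rule sum_le_suminf) (use summ_P assms bK_nonneg in auto)
  then show ?thesis by (simp add: bK0)
qed

definition Kder :: "real \<Rightarrow> real" where "Kder k = pi/2 * (Pder (k^2) * (2*k))"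

lemma ellK_deriv: assumes "\<bar>k\<bar> < 1" shows "(ellK has_real_derivative Kder k) (at k)"
proof -
  have "\<bar>k^2\<bar> < 1" using assms by (simp add: abs_square_less_1)
  have "((\<lambda>k. pi/2 * Pser (k^2)) has_real_derivative pi/2 * (Pder (k^2) * (2*k))) (at k)"
  proof -
    have d1: "(Pser has_real_derivative Pder (k^2)) (at ((\<lambda>k. k^2) k))"
      using Pser_deriv[OF \<open>\<bar>k^2\<bar> < 1\<close>] by simp
    have d2: "((\<lambda>k. k^2) has_real_derivative 2*k) (at k)"
      by (auto intro!: derivative_eq_intros)
    have "((\<lambda>k. Pser (k^2)) has_real_derivative Pder (k^2) * (2*k)) (at k)"
      using DERIV_chain2[OF d1 d2] by simp
    then show ?thesis by (auto intro!: derivative_eq_intros)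
  qed
  then show ?thesis unfolding Kder_def by (simp add: ellK_eq[abs_def])
qed

lemma Kder_nonneg: "0 \<le> k \<Longrightarrow> k < 1 \<Longrightarrow> 0 \<le> Kder k"
  unfolding Kder_def using Pder_nonneg[of "k^2"] by (simp add: power_less_one_iff)

lemma ellK_pos: "0 \<le> k \<Longrightarrow> k < 1 \<Longrightarrow> 0 < ellK k"
  unfolding ellK_eq using Pser_ge1[of "k^2"] by (simp add: power_less_one_iff)

lemmas ellK_deriv_chain[derivative_intros] = ellK_deriv[THEN DERIV_compose_FDERIV]


lemma F_deriv:
  fixes x0 a2 w0 K0 :: real
  assumes x0: "0 < x0" and a2: "a2 < 1" and w0: "w0 < a2"
    and rpos: "2 * sqrt (a2 - w0) < x0 * sqrt (1 - w0)" and K0: "0 < K0"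
  shows "\<exists>d>0. ((\<lambda>t. 2 * sqrt (sqrt (1 - (w0+t)) / (x0 * sqrt (1 - (w0+t)) + 2 * sqrt (a2 - (w0+t))))
      * ellK (sqrt ((x0 * sqrt (1 - (w0+t)) - 2 * sqrt (a2 - (w0+t))) / (x0 * sqrt (1 - (w0+t)) + 2 * sqrt (a2 - (w0+t))))) / K0)
      has_real_derivative d) (at 0)"
proof -
  define s1 where "s1 = sqrt (1 - w0)"
  define s2 where "s2 = sqrt (a2 - w0)"
  have s1p: "0 < s1" and s2p: "0 < s2" using a2 w0 by (auto simp: s1_def s2_def)
  have s12: "s2 < s1" unfolding s1_def s2_def using a2 by simp
  define dS1 where "dS1 = - inverse s1 / 2"
  define dS2 where "dS2 = - inverse s2 / 2"
  define S1 where "S1 = (\<lambda>t. sqrt (1 - (w0+t)))"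
  define S2 where "S2 = (\<lambda>t. sqrt (a2 - (w0+t)))"
  have hS1: "(S1 has_real_derivative dS1) (at 0)" unfolding S1_def dS1_def s1_def
    using a2 w0 by (auto intro!: derivative_eq_intros)
  have hS2: "(S2 has_real_derivative dS2) (at 0)" unfolding S2_def dS2_def s2_def
    using a2 w0 by (auto intro!: derivative_eq_intros)
  have S10: "S1 0 = s1" and S20: "S2 0 = s2" by (auto simp: S1_def S2_def s1_def s2_def)
  define den where "den = x0 * s1 + 2 * s2"
  have denp: "0 < den" unfolding den_def using x0 s1p s2p by (simp add: add_pos_pos)
  define A where "A = (\<lambda>t. S1 t / (x0 * S1 t + 2 * S2 t))"
  define R where "R = (\<lambda>t. (x0 * S1 t - 2 * S2 t) / (x0 * S1 t + 2 * S2 t))"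
  define dA where "dA = (dS1 * den - s1 * (x0 * dS1 + 2 * dS2)) / den^2"
  define dR where "dR = ((x0 * dS1 - 2 * dS2) * den - (x0 * s1 - 2 * s2) * (x0 * dS1 + 2 * dS2)) / den^2"
  have hA: "(A has_real_derivative dA) (at 0)" unfolding A_def dA_def
    using hS1 hS2 denp by (auto intro!: derivative_eq_intros simp: S10 S20 den_def power2_eq_square mult.commute)
  have hR: "(R has_real_derivative dR) (at 0)" unfolding R_def dR_def
    using hS1 hS2 denp by (auto intro!: derivative_eq_intros simp: S10 S20 den_def power2_eq_square mult.commute)
  have numA: "dS1 * den - s1 * (x0 * dS1 + 2 * dS2) = (s1^2 - s2^2) / (s1 * s2)"
    unfolding dS1_def dS2_def den_def using s1p s2p by (simp add: field_simps power2_eq_square)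
  have dAp: "0 < dA" unfolding dA_def numA using s1p s2p s12 denp
    by (auto intro!: divide_pos_pos mult_pos_pos simp: power_strict_mono)
  have numR: "(x0 * dS1 - 2 * dS2) * den - (x0 * s1 - 2 * s2) * (x0 * dS1 + 2 * dS2) = 2 * x0 * (s1^2 - s2^2) / (s1 * s2)"
    unfolding dS1_def dS2_def den_def using s1p s2p by (simp add: field_simps power2_eq_square)
  have dRp: "0 < dR" unfolding dR_def numR using s1p s2p s12 denp x0
    by (auto intro!: divide_pos_pos mult_pos_pos simp: power_strict_mono)
  have A0: "A 0 = s1 / den" by (simp add: A_def S10 S20 den_def)
  have A0p: "0 < A 0" using A0 s1p denp by simp
  have R0: "R 0 = (x0 * s1 - 2 * s2) / den" by (simp add: R_def S10 S20 den_def)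
  have R0p: "0 < R 0" using R0 rpos denp by (simp add: s1_def s2_def)
  have R0l: "R 0 < 1" using R0 denp s2p by (simp add: divide_less_eq den_def)
  have sR0: "0 \<le> sqrt (R 0)" "sqrt (R 0) < 1" using R0p R0l by auto
  define d where "d = 2 * (inverse (sqrt (A 0)) / 2 * dA * ellK (sqrt (R 0))
      + sqrt (A 0) * (Kder (sqrt (R 0)) * (inverse (sqrt (R 0)) / 2 * dR))) / K0"
  have "((\<lambda>t. 2 * sqrt (A t) * ellK (sqrt (R t)) / K0) has_real_derivative d) (at 0)"
    unfolding d_def using hA hR A0p R0p sR0 K0
    by (auto intro!: derivative_eq_intros ellK_deriv[THEN DERIV_chain2] simp: field_simps)
  moreover have "0 < d" unfolding d_def
    using dAp dRp A0p R0p sR0 K0 ellK_pos[OF sR0] Kder_nonneg[OF sR0]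
    by (intro divide_pos_pos mult_pos_pos add_pos_nonneg mult_nonneg_nonneg) auto
  ultimately show ?thesis unfolding A_def R_def S1_def S2_def by blast
qed


lemma region_facts:
  fixes \<mu> g c :: real
  assumes mu: "0 < \<mu>" "\<mu> \<le> 1/2" and S: "(g, c) \<in> regionS \<mu>"
  shows "g + c < -2*(1-2*\<mu>)" "-2 < g + c" "0 < g - c" "g * c < (1-2*\<mu>)^2"
proof -
  define sm where "sm = sqrt (\<mu> * (1 - \<mu>))"
  define a where "a = 1 - 2*\<mu>"
  have a0: "0 \<le> a" using mu by (simp add: a_def)
  have sm2: "sm^2 = \<mu> * (1 - \<mu>)" unfolding sm_def using mu by simp
  have sm0: "0 \<le> sm" unfolding sm_def using mu by simp
  have smu: "\<mu> \<le> sm"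
  proof -
    have "\<mu>^2 \<le> \<mu> * (1 - \<mu>)" using mu by (simp add: power2_eq_square mult_left_mono)
    then have "sqrt (\<mu>^2) \<le> sm" unfolding sm_def by (rule real_sqrt_le_mono)
    then show ?thesis using mu by simp
  qed
  have key: "1 - a^2 = 4 * sm^2" unfolding sm2 a_def by (simp add: power2_eq_square algebra_simps)
  have cJe: "cJ \<mu> = (-1) - 2 * sm" unfolding cJ_def sm_def by simp
  have chh: "ch \<mu> = -a" unfolding ch_def a_def by simp
  have "g + c < -2*a \<and> -2 < g + c \<and> 0 < g - c \<and> g * c < a^2"
  proof (cases "c < cJ \<mu>")
    case True
    with S have c1: "c < -1 - 2 * sm" and g1: "-c - 2 < g" and g2: "g < -c - 2*a"
      unfolding regionS_def cJe a_def by auto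
    have cn: "c < 0" using c1 sm0 by simp
    have "g * c < (-c-2) * c" using g1 cn by (simp add: mult_strict_right_mono_neg)
    moreover have "(2 * sm)^2 < (-(c+1))^2"
      using c1 sm0 by (intro power_strict_mono) auto
    ultimately have "g * c < a^2" using key by (simp add: power2_eq_square algebra_simps)
    then show ?thesis using c1 g1 g2 sm0 by auto
  next
    case False
    with S have c1: "-1 - 2 * sm \<le> c" and c2: "c < -a" and g1: "a^2 / c < g" and g2: "g < -c - 2*a"
      unfolding regionS_def cJe chh a_def by auto
    have cn: "c < 0" using c2 a0 by simp
    have gc: "g * c < a^2" using g1 cn by (simp add: divide_less_eq mult.commute)
    have "\<bar>c + 1\<bar> \<le> 2 * sm" using c1 c2 smu by (auto simp: a_def)
    then have "\<bar>c + 1\<bar> \<le> \<bar>2 * sm\<bar>" using sm0 by simp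
    then have "(c+1)^2 \<le> (2 * sm)^2" by (simp only: abs_le_square_iff)
    then have "(g + c + 2) * c < 0" using gc key by (simp add: power2_eq_square algebra_simps)
    then have h2: "-2 < g + c" using cn by (simp add: mult_less_0_iff)
    have "a^2 < (-c)^2" using c2 a0 by (intro power_strict_mono) auto
    then have "a^2 < c^2" by simp
    then have "(g - c) * c < 0" using gc by (simp add: power2_eq_square algebra_simps)
    then have "0 < g - c" using cn by (simp add: mult_less_0_iff)
    then show ?thesis using h2 gc g2 by auto
  qed
  then show "g + c < -2*(1-2*\<mu>)" "-2 < g + c" "0 < g - c" "g * c < (1-2*\<mu>)^2"
    unfolding a_def by auto
qed


lemma RS_uw: "RS \<mu> g c = 2 * sqrt (sqrt (1 - g*c) / ((g - c) + 2 * sqrt ((1 - 2*\<mu>)^2 - g*c)))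
   * ellK (sqrt (((g - c) - 2 * sqrt ((1 - 2*\<mu>)^2 - g*c)) / ((g - c) + 2 * sqrt ((1 - 2*\<mu>)^2 - g*c))))
   / ellK (sqrt ((1 - (g - c) / (2 * sqrt (1 - g*c))) / 2))"
  unfolding RS_def r2_def k1_def by simp

lemma RS_curve:
  assumes "G - C = U" "G * C = W"
  shows "RS \<mu> G C = 2 * sqrt (sqrt (1 - W) / (U + 2 * sqrt ((1 - 2*\<mu>)^2 - W)))
   * ellK (sqrt ((U - 2 * sqrt ((1 - 2*\<mu>)^2 - W)) / (U + 2 * sqrt ((1 - 2*\<mu>)^2 - W))))
   / ellK (sqrt ((1 - U / (2 * sqrt (1 - W))) / 2))"
  unfolding RS_uw assms ..

theorem mainTheorem7:
  fixes \<mu> g c :: real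
  assumes "0 < \<mu>" and "\<mu> \<le> 1/2"
    and "(g, c) \<in> regionS \<mu>"
  shows "\<exists>dg dc. ((\<lambda>p. RS \<mu> (fst p) (snd p)) has_derivative (\<lambda>h. dg * fst h + dc * snd h)) (at (g, c))
                \<and> (dg, dc) \<noteq> (0, 0)"
proof -
  note F = region_facts[OF assms]
  define a2 where "a2 = (1 - 2*\<mu>)^2"
  have a2l: "a2 < 1" "0 \<le> a2"
  proof -
    have "0 < \<mu> * (1 - \<mu>)" using assms(1,2) by simp
    then show "a2 < 1" unfolding a2_def by (simp add: power2_eq_square algebra_simps)
  qed (simp add: a2_def)
  have gc: "g * c < a2" using F(4) by (simp add: a2_def)
  have w1: "0 < 1 - g*c" using gc a2l by simp
  have w2: "0 < a2 - g*c" using gc by simp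
  have s4: "\<And>x. sqrt (4 * x) = 2 * sqrt x" by (simp add: real_sqrt_mult)
  define q where "q = sqrt (a2 - g*c)"
  have qp: "0 < q" using w2 by (simp add: q_def)
  have uq: "2 * q < g - c"
  proof -
    have "(g+c)^2 > (2*(1-2*\<mu>))^2"
    proof -
      have "(-(g+c))^2 > (2*(1-2*\<mu>))^2" using F(1) assms(2) by (intro power_strict_mono) auto
      then show ?thesis by (simp only: power2_minus)
    qed
    then have "4 * (a2 - g*c) < (g - c)^2" unfolding a2_def by (simp add: power2_eq_square algebra_simps)
    then have "sqrt (4 * (a2 - g*c)) < sqrt ((g-c)^2)" by (rule real_sqrt_less_mono)
    then show ?thesis using F(3) unfolding s4 by (simp add: q_def)
  qed
  define z where "z = sqrt (1 - g*c)"
  have zp: "0 < z" using w1 by (simp add: z_def)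
  have uz: "g - c < 2 * z"
  proof -
    have "(-(g+c))^2 < 2^2" using F(1,2) assms by (intro power_strict_mono) auto
    then have "(g+c)^2 < 4" by (simp only: power2_minus) simp
    then have "(g - c)^2 < 4 * (1 - g*c)" by (simp add: power2_eq_square algebra_simps)
    then have "sqrt ((g-c)^2) < sqrt (4 * (1 - g*c))" by (rule real_sqrt_less_mono)
    then show ?thesis using F(3) unfolding s4 by (simp add: z_def)
  qed
  define r where "r = ((g - c) - 2 * q) / ((g - c) + 2 * q)"
  have r01: "0 < r" "r < 1" using uq qp by (auto simp: r_def divide_less_eq)
  define k where "k = (1 - (g - c) / (2 * z)) / 2"
  have "(g-c)/(2*z) < 1" using uz zp by (simp add: divide_less_eq)
  moreover have "0 < (g-c)/(2*z)" using zp F(3) by simp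
  ultimately have k01: "0 < k" "k < 1" by (auto simp: k_def)
  define RS' where "RS' = (\<lambda>p::real\<times>real. RS \<mu> (fst p) (snd p))"
  have K0p: "0 < ellK (sqrt k)" using k01 by (intro ellK_pos) auto
  have "\<exists>D. (RS' has_derivative D) (at (g, c))"
    unfolding RS'_def RS_uw a2_def[symmetric]
    using w1 w2 r01 k01 K0p qp zp uq
    unfolding q_def[symmetric] z_def[symmetric]
    apply -
    apply (rule exI)
    apply (rule derivative_intros | (simp add: q_def[symmetric] z_def[symmetric] r_def[symmetric] k_def[symmetric]; fail))+
    done
  then obtain D where D: "(RS' has_derivative D) (at (g, c))" by blast
  define x0 where "x0 = (g - c) / z"
  define w0 where "w0 = g * c"
  have x0p: "0 < x0" using F(3) zp by (simp add: x0_def)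
  have u0: "x0 * z = g - c" using zp by (simp add: x0_def)
  define u where "u = (\<lambda>t::real. x0 * sqrt (1 - (w0 + t)))"
  define Dd where "Dd = (\<lambda>t. sqrt ((u t)^2 + 4 * (w0 + t)))"
  define \<gamma> where "\<gamma> = (\<lambda>t. ((u t - Dd t)/2, (- u t - Dd t)/2))"
  have u00: "u 0 = g - c" using u0 by (simp add: u_def w0_def z_def)
  have sq0: "(u 0)^2 + 4 * (w0 + 0) = (g + c)^2" unfolding u00 w0_def by (simp add: power2_eq_square algebra_simps)
  have Dd0: "Dd 0 = -(g+c)" unfolding Dd_def sq0 using F(1) assms(2) by simp
  have g0: "\<gamma> 0 = (g, c)" unfolding \<gamma>_def Dd0 u00 by simp
  have sqp: "0 < (u 0)^2 + 4 * (w0 + 0)" unfolding sq0 using F(1) assms(2) by simp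
  have w0p: "0 < 1 - (w0 + 0)" using w1 by (simp add: w0_def)
  have "\<exists>G. (\<gamma> has_derivative G) (at 0)"
    using sqp w0p unfolding \<gamma>_def Dd_def u_def
    apply -
    apply (rule exI)
    apply (rule derivative_intros | (simp; fail))+
    done
  then obtain G where G: "(\<gamma> has_derivative G) (at 0)" by blast
  have chain: "((\<lambda>t. RS' (\<gamma> t)) has_derivative (\<lambda>h. D (G h))) (at 0)"
    using has_derivative_compose[of \<gamma> G 0 UNIV RS' D] G D g0 by simp
  have "bounded_linear (\<lambda>h. D (G h))" using chain by (rule has_derivative_bounded_linear)
  then obtain e where e: "(\<lambda>h. D (G h)) = (\<lambda>h. h * e)" by (auto simp: real_bounded_linear)
  have d1: "((\<lambda>t. RS' (\<gamma> t)) has_real_derivative e) (at 0)"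
  proof -
    have "(\<lambda>h. h * e) = (*) e" by (auto simp: mult.commute)
    then show ?thesis using chain unfolding e has_field_derivative_def by simp
  qed
  define K0 where "K0 = ellK (sqrt k)"
  have rpos: "2 * sqrt (a2 - w0) < x0 * sqrt (1 - w0)"
    using uq u0 by (simp add: q_def w0_def z_def)
  obtain d where dp: "0 < d" and d2: "((\<lambda>t. 2 * sqrt (sqrt (1 - (w0+t)) / (x0 * sqrt (1 - (w0+t)) + 2 * sqrt (a2 - (w0+t))))
      * ellK (sqrt ((x0 * sqrt (1 - (w0+t)) - 2 * sqrt (a2 - (w0+t))) / (x0 * sqrt (1 - (w0+t)) + 2 * sqrt (a2 - (w0+t))))) / K0)
      has_real_derivative d) (at 0)"
    using F_deriv[OF x0p a2l(1) _ rpos] gc K0p unfolding K0_def w0_def by blast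
  have ev1: "eventually (\<lambda>t. 0 < 1 - (w0 + t)) (nhds 0)"
  proof -
    have "isCont (\<lambda>t. 1 - (w0 + t)) 0" by (intro continuous_intros)
    then have "((\<lambda>t. 1 - (w0 + t)) \<longlongrightarrow> 1 - (w0 + 0)) (nhds 0)"
      unfolding isCont_def using tendsto_at_iff_tendsto_nhds[of "(\<lambda>t. 1 - (w0 + t))" 0] by simp
    from order_tendstoD(1)[OF this w0p] show ?thesis .
  qed
  have ev2: "eventually (\<lambda>t. 0 < (u t)^2 + 4 * (w0 + t)) (nhds 0)"
  proof -
    have "isCont (\<lambda>t. (u t)^2 + 4 * (w0 + t)) 0" unfolding u_def by (intro continuous_intros)
    then have "((\<lambda>t. (u t)^2 + 4 * (w0 + t)) \<longlongrightarrow> (u 0)^2 + 4 * (w0 + 0)) (nhds 0)"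
      unfolding isCont_def using tendsto_at_iff_tendsto_nhds[of "(\<lambda>t. (u t)^2 + 4 * (w0 + t))" 0] by simp
    from order_tendstoD(1)[OF this sqp] show ?thesis .
  qed
  have kx: "k = (1 - x0 / 2) / 2" unfolding k_def x0_def by simp
  have ev: "eventually (\<lambda>t. RS' (\<gamma> t) = 2 * sqrt (sqrt (1 - (w0+t)) / (x0 * sqrt (1 - (w0+t)) + 2 * sqrt (a2 - (w0+t))))
      * ellK (sqrt ((x0 * sqrt (1 - (w0+t)) - 2 * sqrt (a2 - (w0+t))) / (x0 * sqrt (1 - (w0+t)) + 2 * sqrt (a2 - (w0+t))))) / K0) (nhds 0)"
    using ev1 ev2
  proof eventually_elim
    case (elim t)
    have e1: "(u t - Dd t)/2 - (- u t - Dd t)/2 = u t" by (simp add: field_simps)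
    have "Dd t ^ 2 = (u t)^2 + 4 * (w0 + t)" unfolding Dd_def using elim(2) by simp
    then have e2: "(u t - Dd t)/2 * ((- u t - Dd t)/2) = w0 + t"
      by (simp add: power2_eq_square field_simps)
    have e3: "u t / (2 * sqrt (1 - (w0 + t))) = x0 / 2" unfolding u_def using elim(1) by simp
    show ?case unfolding RS'_def \<gamma>_def fst_conv snd_conv RS_curve[OF e1 e2] e3 K0_def kx a2_def
      by (simp add: u_def)
  qed
  have d3: "((\<lambda>t. RS' (\<gamma> t)) has_real_derivative d) (at 0)"
    by (subst DERIV_cong_ev[OF refl ev refl]) (rule d2)
  have "e = d" using DERIV_unique[OF d1 d3] .
  then have ep: "0 < e" using dp by simp
  define dg where "dg = D (1, 0)"
  define dc where "dc = D (0, 1)"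
  have lin: "linear D" using D by (intro bounded_linear.linear has_derivative_bounded_linear)
  have Dform: "D = (\<lambda>h. dg * fst h + dc * snd h)"
  proof
    fix h :: "real \<times> real"
    have "D h = D (fst h *\<^sub>R (1, 0) + snd h *\<^sub>R (0, 1))" by (cases h) simp
    also have "\<dots> = fst h *\<^sub>R D (1, 0) + snd h *\<^sub>R D (0, 1)"
      by (simp only: linear_add[OF lin] linear_scale[OF lin])
    also have "\<dots> = fst h * dg + snd h * dc" by (simp add: dg_def dc_def)
    finally show "D h = dg * fst h + dc * snd h" by (simp add: mult.commute)
  qed
  have "(dg, dc) \<noteq> (0, 0)"
  proof
    assume "(dg, dc) = (0, 0)"
    then have "D = (\<lambda>h. 0)" unfolding Dform by simp
    moreover have "D (G 1) = e" using fun_cong[OF e, of 1] by simp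
    ultimately have "e = 0" by simp
    then show False using ep by simp
  qed
  then show ?thesis using D Dform unfolding RS'_def by auto
qed

end
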